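(* Let $P:\mathcal C^{op}\to\mathbf{Pos}$ and $Q:\mathcal D^{op}\to\mathbf{Pos}$ be doctrines and let $(L,\lambda):P\to Q$, $(R,\rho):Q\to P$ be 1-arrows of $\mathbf{IdxPos}$ forming an adjunction $(L,\lambda)\dashv(R,\rho)$ in $\mathbf{IdxPos}$ with unit $\eta:\mathrm{Id}_{\mathcal C}\Rightarrow RL$ and counit $\epsilon:LR\Rightarrow\mathrm{Id}_{\mathcal D}$. Then the natural transformation $\square=\lambda\cdot(P\eta^{op})\cdot(\rho L^{op}):Q\circ L^{op}\Rightarrow Q\circ L^{op}$, with components $$\square_X=\lambda_X\circ P(\eta_X)\circ\rho_{LX}:Q(LX)\to Q(LX),$$ is an interior operator on the doctrine $Q\circ L^{op}:\mathcal C^{op}\to\mathbf{Pos}$.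
   Context: A doctrine is a functor $P:\mathcal C^{op}\to\mathbf{Pos}$; for $t:X\to Y$, $P(t):PY\to PX$ is reindexing. In the 2-category $\mathbf{IdxPos}$, a 1-arrow $(F,f):P\to Q$ (with $P:\mathcal C^{op}\to\mathbf{Pos}$, $Q:\mathcal D^{op}\to\mathbf{Pos}$) is a functor $F:\mathcal C\to\mathcal D$ with a natural transformation $f:P\Rightarrow Q\circ F^{op}$; a 2-arrow $\theta:(F,f)\Rightarrow(F',f')$ is a natural transformation $\theta:F\Rightarrow F'$ with $f_X(\alpha)\le Q(\theta_X)(f'_X(\alpha))$ for all $X,\alpha$; composition of $(G,g)$ then $(F,f)$ is $(FG,(fG^{op})\cdot g)$ (components $f_{GX}\circ g_X$), and 2-arrows compose as natural transformations. An adjunction in $\mathbf{IdxPos}$ is in the usual 2-categorical sense; equivalently, $L\dashv R$ is an adjunction of categories with unit $\eta$, counit $\epsilon$, and $\alpha\le P(\eta_X)(\rho_{LX}(\lambda_X\alpha))$ for $\alpha\in PX$, $\lambda_{RY}(\rho_Y\beta)\le Q(\epsilon_Y)(\beta)$ for $\beta\in QY$. An interior operator on a doctrine $M:\mathcal C^{op}\to\mathbf{Pos}$ is a natural transformation $\square:M\Rightarrow M$ with $\square_X(\alpha)\le\alpha$ and $\square_X(\alpha)\le\square_X(\square_X(\alpha))$ for all $X$ and $\alpha\in MX$. *)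

theory Defs
  imports Main
begin

text \<open>hom X Y is the set of arrows X -> Y; cmp X Y Z g f is the composite g o f of
  f : X -> Y and g : Y -> Z; idt X is the identity on X.\<close>

record ('o, 'm) cat =
  ob  :: "'o set"
  hom :: "'o \<Rightarrow> 'o \<Rightarrow> 'm set"
  cmp :: "'o \<Rightarrow> 'o \<Rightarrow> 'o \<Rightarrow> 'm \<Rightarrow> 'm \<Rightarrow> 'm"
  idt :: "'o \<Rightarrow> 'm"

definition category :: "('o, 'm) cat \<Rightarrow> bool" where
  "category C \<longleftrightarrow>
     (\<forall>X\<in>ob C. idt C X \<in> hom C X X) \<and>
     (\<forall>X\<in>ob C. \<forall>Y\<in>ob C. \<forall>Z\<in>ob C. \<forall>f\<in>hom C X Y. \<forall>g\<in>hom C Y Z.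
        cmp C X Y Z g f \<in> hom C X Z) \<and>
     (\<forall>X\<in>ob C. \<forall>Y\<in>ob C. \<forall>f\<in>hom C X Y.
        cmp C X Y Y (idt C Y) f = f \<and> cmp C X X Y f (idt C X) = f) \<and>
     (\<forall>W\<in>ob C. \<forall>X\<in>ob C. \<forall>Y\<in>ob C. \<forall>Z\<in>ob C.
      \<forall>f\<in>hom C W X. \<forall>g\<in>hom C X Y. \<forall>h\<in>hom C Y Z.
        cmp C W Y Z h (cmp C W X Y g f) = cmp C W X Z (cmp C X Y Z h g) f)"

record ('o1, 'm1, 'o2, 'm2) ftr =
  fo :: "'o1 \<Rightarrow> 'o2"
  fa :: "'o1 \<Rightarrow> 'o1 \<Rightarrow> 'm1 \<Rightarrow> 'm2"

definition is_functor :: "('o1, 'm1) cat \<Rightarrow> ('o2, 'm2) cat \<Rightarrow> ('o1, 'm1, 'o2, 'm2) ftr \<Rightarrow> bool" where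
  "is_functor C D F \<longleftrightarrow> category C \<and> category D \<and>
     (\<forall>X\<in>ob C. fo F X \<in> ob D) \<and>
     (\<forall>X\<in>ob C. \<forall>Y\<in>ob C. \<forall>t\<in>hom C X Y. fa F X Y t \<in> hom D (fo F X) (fo F Y)) \<and>
     (\<forall>X\<in>ob C. fa F X X (idt C X) = idt D (fo F X)) \<and>
     (\<forall>X\<in>ob C. \<forall>Y\<in>ob C. \<forall>Z\<in>ob C. \<forall>f\<in>hom C X Y. \<forall>g\<in>hom C Y Z.
        fa F X Z (cmp C X Y Z g f) = cmp D (fo F X) (fo F Y) (fo F Z) (fa F Y Z g) (fa F X Y f))"

definition id_ftr :: "('o, 'm, 'o, 'm) ftr" where
  "id_ftr = \<lparr>fo = (\<lambda>X. X), fa = (\<lambda>X Y t. t)\<rparr>"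

definition comp_ftr :: "('o2, 'm2, 'o3, 'm3) ftr \<Rightarrow> ('o1, 'm1, 'o2, 'm2) ftr \<Rightarrow> ('o1, 'm1, 'o3, 'm3) ftr" where
  "comp_ftr F G = \<lparr>fo = (\<lambda>X. fo F (fo G X)),
                   fa = (\<lambda>X Y t. fa F (fo G X) (fo G Y) (fa G X Y t))\<rparr>"

definition nat_trans ::
  "('o1, 'm1) cat \<Rightarrow> ('o2, 'm2) cat \<Rightarrow> ('o1, 'm1, 'o2, 'm2) ftr \<Rightarrow> ('o1, 'm1, 'o2, 'm2) ftr
     \<Rightarrow> ('o1 \<Rightarrow> 'm2) \<Rightarrow> bool" where
  "nat_trans C D F G \<theta> \<longleftrightarrow> is_functor C D F \<and> is_functor C D G \<and>
     (\<forall>X\<in>ob C. \<theta> X \<in> hom D (fo F X) (fo G X)) \<and>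
     (\<forall>X\<in>ob C. \<forall>Y\<in>ob C. \<forall>t\<in>hom C X Y.
        cmp D (fo F X) (fo G X) (fo G Y) (fa G X Y t) (\<theta> X)
      = cmp D (fo F X) (fo F Y) (fo G Y) (\<theta> Y) (fa F X Y t))"

text \<open>car X is the underlying set of P X, le X its partial order, and
  re X Y t : P Y -> P X is the reindexing P(t) along t : X -> Y.\<close>

record ('o, 'm, 'e) doctr =
  car :: "'o \<Rightarrow> 'e set"
  le  :: "'o \<Rightarrow> 'e \<Rightarrow> 'e \<Rightarrow> bool"
  re  :: "'o \<Rightarrow> 'o \<Rightarrow> 'm \<Rightarrow> 'e \<Rightarrow> 'e"

definition poset_on :: "'e set \<Rightarrow> ('e \<Rightarrow> 'e \<Rightarrow> bool) \<Rightarrow> bool" where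
  "poset_on A r \<longleftrightarrow> (\<forall>a\<in>A. r a a) \<and> (\<forall>a\<in>A. \<forall>b\<in>A. r a b \<and> r b a \<longrightarrow> a = b) \<and>
     (\<forall>a\<in>A. \<forall>b\<in>A. \<forall>c\<in>A. r a b \<and> r b c \<longrightarrow> r a c)"

definition doctrine :: "('o, 'm) cat \<Rightarrow> ('o, 'm, 'e) doctr \<Rightarrow> bool" where
  "doctrine C P \<longleftrightarrow> category C \<and>
     (\<forall>X\<in>ob C. poset_on (car P X) (le P X)) \<and>
     (\<forall>X\<in>ob C. \<forall>Y\<in>ob C. \<forall>t\<in>hom C X Y. \<forall>a\<in>car P Y. re P X Y t a \<in> car P X) \<and>
     (\<forall>X\<in>ob C. \<forall>Y\<in>ob C. \<forall>t\<in>hom C X Y. \<forall>a\<in>car P Y. \<forall>b\<in>car P Y.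
        le P Y a b \<longrightarrow> le P X (re P X Y t a) (re P X Y t b)) \<and>
     (\<forall>X\<in>ob C. \<forall>a\<in>car P X. re P X X (idt C X) a = a) \<and>
     (\<forall>X\<in>ob C. \<forall>Y\<in>ob C. \<forall>Z\<in>ob C. \<forall>f\<in>hom C X Y. \<forall>g\<in>hom C Y Z. \<forall>a\<in>car P Z.
        re P X Z (cmp C X Y Z g f) a = re P X Y f (re P Y Z g a))"

definition pre_doctr :: "('o2, 'm2, 'e) doctr \<Rightarrow> ('o1, 'm1, 'o2, 'm2) ftr \<Rightarrow> ('o1, 'm1, 'e) doctr" where
  "pre_doctr Q F = \<lparr>car = (\<lambda>X. car Q (fo F X)), le = (\<lambda>X. le Q (fo F X)),
                    re = (\<lambda>X Y t. re Q (fo F X) (fo F Y) (fa F X Y t))\<rparr>"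

definition doctr_nat :: "('o, 'm) cat \<Rightarrow> ('o, 'm, 'e1) doctr \<Rightarrow> ('o, 'm, 'e2) doctr
     \<Rightarrow> ('o \<Rightarrow> 'e1 \<Rightarrow> 'e2) \<Rightarrow> bool" where
  "doctr_nat C P M f \<longleftrightarrow>
     (\<forall>X\<in>ob C. \<forall>a\<in>car P X. f X a \<in> car M X) \<and>
     (\<forall>X\<in>ob C. \<forall>a\<in>car P X. \<forall>b\<in>car P X. le P X a b \<longrightarrow> le M X (f X a) (f X b)) \<and>
     (\<forall>X\<in>ob C. \<forall>Y\<in>ob C. \<forall>t\<in>hom C X Y. \<forall>a\<in>car P Y.
        f X (re P X Y t a) = re M X Y t (f Y a))"

definition one_arrow ::
  "('o1, 'm1) cat \<Rightarrow> ('o2, 'm2) cat \<Rightarrow> ('o1, 'm1, 'e1) doctr \<Rightarrow> ('o2, 'm2, 'e2) doctr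
     \<Rightarrow> ('o1, 'm1, 'o2, 'm2) ftr \<Rightarrow> ('o1 \<Rightarrow> 'e1 \<Rightarrow> 'e2) \<Rightarrow> bool" where
  "one_arrow C D P Q F f \<longleftrightarrow> doctrine C P \<and> doctrine D Q \<and> is_functor C D F \<and>
     doctr_nat C P (pre_doctr Q F) f"

definition id_comp :: "'o \<Rightarrow> 'e \<Rightarrow> 'e" where
  "id_comp = (\<lambda>X a. a)"

definition comp_comp :: "('o1, 'm1, 'o2, 'm2) ftr \<Rightarrow> ('o2 \<Rightarrow> 'e2 \<Rightarrow> 'e3) \<Rightarrow> ('o1 \<Rightarrow> 'e1 \<Rightarrow> 'e2)
     \<Rightarrow> ('o1 \<Rightarrow> 'e1 \<Rightarrow> 'e3)" where
  "comp_comp G f g = (\<lambda>X a. f (fo G X) (g X a))"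

definition two_arrow ::
  "('o1, 'm1) cat \<Rightarrow> ('o2, 'm2) cat \<Rightarrow> ('o1, 'm1, 'e1) doctr \<Rightarrow> ('o2, 'm2, 'e2) doctr
     \<Rightarrow> ('o1, 'm1, 'o2, 'm2) ftr \<Rightarrow> ('o1 \<Rightarrow> 'e1 \<Rightarrow> 'e2)
     \<Rightarrow> ('o1, 'm1, 'o2, 'm2) ftr \<Rightarrow> ('o1 \<Rightarrow> 'e1 \<Rightarrow> 'e2)
     \<Rightarrow> ('o1 \<Rightarrow> 'm2) \<Rightarrow> bool" where
  "two_arrow C D P Q F f F' f' \<theta> \<longleftrightarrow>
     one_arrow C D P Q F f \<and> one_arrow C D P Q F' f' \<and> nat_trans C D F F' \<theta> \<and>
     (\<forall>X\<in>ob C. \<forall>a\<in>car P X.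
        le Q (fo F X) (f X a) (re Q (fo F X) (fo F' X) (\<theta> X) (f' X a)))"

text \<open>Adjunction (L,lam) -| (R,rho) in IdxPos with unit eta : Id => (R,rho)(L,lam)
  and counit eps : (L,lam)(R,rho) => Id, satisfying the triangle identities
  (equalities of 2-arrows, i.e. of their underlying natural transformations).\<close>
definition idxpos_adjunction ::
  "('o1, 'm1) cat \<Rightarrow> ('o2, 'm2) cat \<Rightarrow> ('o1, 'm1, 'e1) doctr \<Rightarrow> ('o2, 'm2, 'e2) doctr
     \<Rightarrow> ('o1, 'm1, 'o2, 'm2) ftr \<Rightarrow> ('o1 \<Rightarrow> 'e1 \<Rightarrow> 'e2)
     \<Rightarrow> ('o2, 'm2, 'o1, 'm1) ftr \<Rightarrow> ('o2 \<Rightarrow> 'e2 \<Rightarrow> 'e1)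
     \<Rightarrow> ('o1 \<Rightarrow> 'm1) \<Rightarrow> ('o2 \<Rightarrow> 'm2) \<Rightarrow> bool" where
  "idxpos_adjunction C D P Q L lam R rho eta eps \<longleftrightarrow>
     one_arrow C D P Q L lam \<and> one_arrow D C Q P R rho \<and>
     two_arrow C C P P id_ftr id_comp (comp_ftr R L) (comp_comp L rho lam) eta \<and>
     two_arrow D D Q Q (comp_ftr L R) (comp_comp R lam rho) id_ftr id_comp eps \<and>
     (\<forall>X\<in>ob C.
        cmp D (fo L X) (fo L (fo R (fo L X))) (fo L X)
            (eps (fo L X)) (fa L X (fo R (fo L X)) (eta X)) = idt D (fo L X)) \<and>
     (\<forall>Y\<in>ob D.
        cmp C (fo R Y) (fo R (fo L (fo R Y))) (fo R Y)
            (fa R (fo L (fo R Y)) Y (eps Y)) (eta (fo R Y)) = idt C (fo R Y))"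

definition interior_operator :: "('o, 'm) cat \<Rightarrow> ('o, 'm, 'e) doctr \<Rightarrow> ('o \<Rightarrow> 'e \<Rightarrow> 'e) \<Rightarrow> bool" where
  "interior_operator C M box \<longleftrightarrow> doctr_nat C M M box \<and>
     (\<forall>X\<in>ob C. \<forall>a\<in>car M X. le M X (box X a) a) \<and>
     (\<forall>X\<in>ob C. \<forall>a\<in>car M X. le M X (box X a) (box X (box X a)))"

end

theory Submission
  imports Defs
begin

theorem corollary5p11:
  fixes C :: "('o1, 'm1) cat" and D :: "('o2, 'm2) cat"
    and P :: "('o1, 'm1, 'e1) doctr" and Q :: "('o2, 'm2, 'e2) doctr"
    and L :: "('o1, 'm1, 'o2, 'm2) ftr" and lam :: "'o1 \<Rightarrow> 'e1 \<Rightarrow> 'e2"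
    and R :: "('o2, 'm2, 'o1, 'm1) ftr" and rho :: "'o2 \<Rightarrow> 'e2 \<Rightarrow> 'e1"
    and eta :: "'o1 \<Rightarrow> 'm1" and eps :: "'o2 \<Rightarrow> 'm2"
  assumes "idxpos_adjunction C D P Q L lam R rho eta eps"
  shows "interior_operator C (pre_doctr Q L)
           (\<lambda>X a. lam X (re P X (fo R (fo L X)) (eta X) (rho (fo L X) a)))"
proof -
  note A = assms[unfolded idxpos_adjunction_def]
  have oL: "one_arrow C D P Q L lam" using A by simp
  have oR: "one_arrow D C Q P R rho" using A by simp
  have un: "two_arrow C C P P id_ftr id_comp (comp_ftr R L) (comp_comp L rho lam) eta" using A by simp
  have cu: "two_arrow D D Q Q (comp_ftr L R) (comp_comp R lam rho) id_ftr id_comp eps" using A by simp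
  have tri: "\<And>X. X \<in> ob C \<Longrightarrow> cmp D (fo L X) (fo L (fo R (fo L X))) (fo L X)
            (eps (fo L X)) (fa L X (fo R (fo L X)) (eta X)) = idt D (fo L X)" using A by simp
  have dP: "doctrine C P" and dQ: "doctrine D Q" and FL: "is_functor C D L"
    and lamN: "doctr_nat C P (pre_doctr Q L) lam" using oL[unfolded one_arrow_def] by simp_all
  have FR: "is_functor D C R" and rhoN: "doctr_nat D Q (pre_doctr P R) rho"
    using oR[unfolded one_arrow_def] by simp_all
  have etaN: "nat_trans C C id_ftr (comp_ftr R L) eta" using un[unfolded two_arrow_def] by simp
  have unitle: "\<And>X a. X \<in> ob C \<Longrightarrow> a \<in> car P X \<Longrightarrow>
      le P X a (re P X (fo R (fo L X)) (eta X) (rho (fo L X) (lam X a)))"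
    using un unfolding two_arrow_def id_ftr_def comp_ftr_def comp_comp_def id_comp_def by simp
  have counitle: "\<And>Y b. Y \<in> ob D \<Longrightarrow> b \<in> car Q Y \<Longrightarrow>
      le Q (fo L (fo R Y)) (lam (fo R Y) (rho Y b)) (re Q (fo L (fo R Y)) Y (eps Y) b)"
    using cu unfolding two_arrow_def id_ftr_def comp_ftr_def comp_comp_def id_comp_def by simp
  have L_ob: "\<And>X. X \<in> ob C \<Longrightarrow> fo L X \<in> ob D" using FL[unfolded is_functor_def] by simp
  have R_ob: "\<And>X. X \<in> ob D \<Longrightarrow> fo R X \<in> ob C" using FR[unfolded is_functor_def] by simp
  have L_hom: "\<And>X Y t. X \<in> ob C \<Longrightarrow> Y \<in> ob C \<Longrightarrow> t \<in> hom C X Y \<Longrightarrow>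
      fa L X Y t \<in> hom D (fo L X) (fo L Y)" using FL[unfolded is_functor_def] by simp
  have R_hom: "\<And>X Y t. X \<in> ob D \<Longrightarrow> Y \<in> ob D \<Longrightarrow> t \<in> hom D X Y \<Longrightarrow>
      fa R X Y t \<in> hom C (fo R X) (fo R Y)" using FR[unfolded is_functor_def] by simp
  have eta_hom: "\<And>X. X \<in> ob C \<Longrightarrow> eta X \<in> hom C X (fo R (fo L X))"
    using etaN unfolding nat_trans_def id_ftr_def comp_ftr_def by simp
  have eta_nat: "\<And>X Y t. X \<in> ob C \<Longrightarrow> Y \<in> ob C \<Longrightarrow> t \<in> hom C X Y \<Longrightarrow>
      cmp C X (fo R (fo L X)) (fo R (fo L Y)) (fa R (fo L X) (fo L Y) (fa L X Y t)) (eta X)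
      = cmp C X Y (fo R (fo L Y)) (eta Y) t"
    using etaN unfolding nat_trans_def id_ftr_def comp_ftr_def by simp
  have lam_car: "\<And>X a. X \<in> ob C \<Longrightarrow> a \<in> car P X \<Longrightarrow> lam X a \<in> car Q (fo L X)"
    using lamN unfolding doctr_nat_def pre_doctr_def by simp
  have lam_mono: "\<And>X a b. X \<in> ob C \<Longrightarrow> a \<in> car P X \<Longrightarrow> b \<in> car P X \<Longrightarrow> le P X a b \<Longrightarrow>
      le Q (fo L X) (lam X a) (lam X b)"
    using lamN unfolding doctr_nat_def pre_doctr_def by simp
  have lam_nat: "\<And>X Y t a. X \<in> ob C \<Longrightarrow> Y \<in> ob C \<Longrightarrow> t \<in> hom C X Y \<Longrightarrow> a \<in> car P Y \<Longrightarrow>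
      lam X (re P X Y t a) = re Q (fo L X) (fo L Y) (fa L X Y t) (lam Y a)"
    using lamN unfolding doctr_nat_def pre_doctr_def by simp
  have rho_car: "\<And>X a. X \<in> ob D \<Longrightarrow> a \<in> car Q X \<Longrightarrow> rho X a \<in> car P (fo R X)"
    using rhoN unfolding doctr_nat_def pre_doctr_def by simp
  have rho_mono: "\<And>X a b. X \<in> ob D \<Longrightarrow> a \<in> car Q X \<Longrightarrow> b \<in> car Q X \<Longrightarrow> le Q X a b \<Longrightarrow>
      le P (fo R X) (rho X a) (rho X b)"
    using rhoN unfolding doctr_nat_def pre_doctr_def by simp
  have rho_nat: "\<And>X Y t a. X \<in> ob D \<Longrightarrow> Y \<in> ob D \<Longrightarrow> t \<in> hom D X Y \<Longrightarrow> a \<in> car Q Y \<Longrightarrow>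
      rho X (re Q X Y t a) = re P (fo R X) (fo R Y) (fa R X Y t) (rho Y a)"
    using rhoN unfolding doctr_nat_def pre_doctr_def by simp
  have P_car: "\<And>X Y t a. X \<in> ob C \<Longrightarrow> Y \<in> ob C \<Longrightarrow> t \<in> hom C X Y \<Longrightarrow> a \<in> car P Y \<Longrightarrow>
      re P X Y t a \<in> car P X" using dP[unfolded doctrine_def] by simp
  have P_mono: "\<And>X Y t a b. X \<in> ob C \<Longrightarrow> Y \<in> ob C \<Longrightarrow> t \<in> hom C X Y \<Longrightarrow> a \<in> car P Y \<Longrightarrow>
      b \<in> car P Y \<Longrightarrow> le P Y a b \<Longrightarrow> le P X (re P X Y t a) (re P X Y t b)"
    using dP[unfolded doctrine_def] by simp
  have P_comp: "\<And>X Y Z f g a. X \<in> ob C \<Longrightarrow> Y \<in> ob C \<Longrightarrow> Z \<in> ob C \<Longrightarrow> f \<in> hom C X Y \<Longrightarrow>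
      g \<in> hom C Y Z \<Longrightarrow> a \<in> car P Z \<Longrightarrow>
      re P X Z (cmp C X Y Z g f) a = re P X Y f (re P Y Z g a)"
    using dP[unfolded doctrine_def] by simp
  have Q_car: "\<And>X Y t a. X \<in> ob D \<Longrightarrow> Y \<in> ob D \<Longrightarrow> t \<in> hom D X Y \<Longrightarrow> a \<in> car Q Y \<Longrightarrow>
      re Q X Y t a \<in> car Q X" using dQ[unfolded doctrine_def] by simp
  have Q_mono: "\<And>X Y t a b. X \<in> ob D \<Longrightarrow> Y \<in> ob D \<Longrightarrow> t \<in> hom D X Y \<Longrightarrow> a \<in> car Q Y \<Longrightarrow>
      b \<in> car Q Y \<Longrightarrow> le Q Y a b \<Longrightarrow> le Q X (re Q X Y t a) (re Q X Y t b)"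
    using dQ[unfolded doctrine_def] by simp
  have Q_comp: "\<And>X Y Z f g a. X \<in> ob D \<Longrightarrow> Y \<in> ob D \<Longrightarrow> Z \<in> ob D \<Longrightarrow> f \<in> hom D X Y \<Longrightarrow>
      g \<in> hom D Y Z \<Longrightarrow> a \<in> car Q Z \<Longrightarrow>
      re Q X Z (cmp D X Y Z g f) a = re Q X Y f (re Q Y Z g a)"
    using dQ[unfolded doctrine_def] by simp
  have Q_id: "\<And>X a. X \<in> ob D \<Longrightarrow> a \<in> car Q X \<Longrightarrow> re Q X X (idt D X) a = a"
    using dQ[unfolded doctrine_def] by simp
  have eps_hom: "\<And>Y. Y \<in> ob D \<Longrightarrow> eps Y \<in> hom D (fo L (fo R Y)) Y"
    using cu unfolding two_arrow_def nat_trans_def id_ftr_def comp_ftr_def by simp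
  define box where "box = (\<lambda>X a. lam X (re P X (fo R (fo L X)) (eta X) (rho (fo L X) a)))"
  have box_car: "\<And>X a. X \<in> ob C \<Longrightarrow> a \<in> car Q (fo L X) \<Longrightarrow> box X a \<in> car Q (fo L X)"
    unfolding box_def by (meson L_ob R_ob eta_hom lam_car rho_car P_car)
  have box_mono: "\<And>X a b. X \<in> ob C \<Longrightarrow> a \<in> car Q (fo L X) \<Longrightarrow> b \<in> car Q (fo L X) \<Longrightarrow>
      le Q (fo L X) a b \<Longrightarrow> le Q (fo L X) (box X a) (box X b)"
    unfolding box_def by (meson L_ob R_ob eta_hom lam_car rho_car P_car lam_mono rho_mono P_mono)
  have box_nat: "box X (re Q (fo L X) (fo L Y) (fa L X Y t) a)
      = re Q (fo L X) (fo L Y) (fa L X Y t) (box Y a)"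
    if X: "X \<in> ob C" and Y: "Y \<in> ob C" and t: "t \<in> hom C X Y" and a: "a \<in> car Q (fo L Y)"
    for X Y t a
  proof -
    have LX: "fo L X \<in> ob D" and LY: "fo L Y \<in> ob D" using L_ob X Y by auto
    have RLX: "fo R (fo L X) \<in> ob C" and RLY: "fo R (fo L Y) \<in> ob C" using R_ob LX LY by auto
    have Lt: "fa L X Y t \<in> hom D (fo L X) (fo L Y)" using L_hom X Y t by auto
    have RLt: "fa R (fo L X) (fo L Y) (fa L X Y t) \<in> hom C (fo R (fo L X)) (fo R (fo L Y))"
      using R_hom LX LY Lt by auto
    have ra: "rho (fo L Y) a \<in> car P (fo R (fo L Y))" using rho_car LY a by auto
    have "re P X (fo R (fo L X)) (eta X) (rho (fo L X) (re Q (fo L X) (fo L Y) (fa L X Y t) a))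
        = re P X (fo R (fo L X)) (eta X) (re P (fo R (fo L X)) (fo R (fo L Y))
             (fa R (fo L X) (fo L Y) (fa L X Y t)) (rho (fo L Y) a))"
      using rho_nat LX LY Lt a by simp
    also have "\<dots> = re P X (fo R (fo L Y)) (cmp C X (fo R (fo L X)) (fo R (fo L Y))
             (fa R (fo L X) (fo L Y) (fa L X Y t)) (eta X)) (rho (fo L Y) a)"
      using P_comp[OF X RLX RLY eta_hom[OF X] RLt ra] by simp
    also have "\<dots> = re P X (fo R (fo L Y)) (cmp C X Y (fo R (fo L Y)) (eta Y) t) (rho (fo L Y) a)"
      using eta_nat X Y t by simp
    also have "\<dots> = re P X Y t (re P Y (fo R (fo L Y)) (eta Y) (rho (fo L Y) a))"
      using P_comp[OF X Y RLY t eta_hom[OF Y] ra] by simp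
    finally have e: "re P X (fo R (fo L X)) (eta X) (rho (fo L X) (re Q (fo L X) (fo L Y) (fa L X Y t) a))
        = re P X Y t (re P Y (fo R (fo L Y)) (eta Y) (rho (fo L Y) a))" .
    show ?thesis unfolding box_def using e lam_nat[OF X Y t P_car[OF Y RLY eta_hom[OF Y] ra]] by simp
  qed
  have defl: "le Q (fo L X) (box X a) a" if X: "X \<in> ob C" and a: "a \<in> car Q (fo L X)" for X a
  proof -
    have LX: "fo L X \<in> ob D" using L_ob X by auto
    have RLX: "fo R (fo L X) \<in> ob C" using R_ob LX by auto
    have LRLX: "fo L (fo R (fo L X)) \<in> ob D" using L_ob RLX by auto
    have Le: "fa L X (fo R (fo L X)) (eta X) \<in> hom D (fo L X) (fo L (fo R (fo L X)))"
      using L_hom X RLX eta_hom by auto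
    have ra: "rho (fo L X) a \<in> car P (fo R (fo L X))" using rho_car LX a by auto
    have c: "le Q (fo L (fo R (fo L X))) (lam (fo R (fo L X)) (rho (fo L X) a))
        (re Q (fo L (fo R (fo L X))) (fo L X) (eps (fo L X)) a)" using counitle LX a by auto
    have m: "le Q (fo L X) (re Q (fo L X) (fo L (fo R (fo L X))) (fa L X (fo R (fo L X)) (eta X))
            (lam (fo R (fo L X)) (rho (fo L X) a)))
          (re Q (fo L X) (fo L (fo R (fo L X))) (fa L X (fo R (fo L X)) (eta X))
            (re Q (fo L (fo R (fo L X))) (fo L X) (eps (fo L X)) a))"
      by (rule Q_mono[OF LX LRLX Le lam_car[OF RLX ra] Q_car[OF LRLX LX eps_hom[OF LX] a] c])
    have l: "re Q (fo L X) (fo L (fo R (fo L X))) (fa L X (fo R (fo L X)) (eta X))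
            (lam (fo R (fo L X)) (rho (fo L X) a)) = box X a"
      unfolding box_def using lam_nat[OF X RLX eta_hom[OF X] ra] by simp
    have r: "re Q (fo L X) (fo L (fo R (fo L X))) (fa L X (fo R (fo L X)) (eta X))
            (re Q (fo L (fo R (fo L X))) (fo L X) (eps (fo L X)) a) = a"
      using Q_comp[OF LX LRLX LX Le eps_hom[OF LX] a, symmetric] tri[OF X] Q_id[OF LX a] by simp
    show ?thesis using m l r by simp
  qed
  have idem: "le Q (fo L X) (box X a) (box X (box X a))" if X: "X \<in> ob C" and a: "a \<in> car Q (fo L X)" for X a
  proof -
    have LX: "fo L X \<in> ob D" using L_ob X by auto
    have RLX: "fo R (fo L X) \<in> ob C" using R_ob LX by auto
    define b where "b = re P X (fo R (fo L X)) (eta X) (rho (fo L X) a)"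
    have b: "b \<in> car P X" unfolding b_def using P_car[OF X RLX eta_hom[OF X] rho_car[OF LX a]] .
    have u: "le P X b (re P X (fo R (fo L X)) (eta X) (rho (fo L X) (lam X b)))" using unitle X b by auto
    have "le Q (fo L X) (lam X b) (lam X (re P X (fo R (fo L X)) (eta X) (rho (fo L X) (lam X b))))"
      by (rule lam_mono[OF X b P_car[OF X RLX eta_hom[OF X] rho_car[OF LX lam_car[OF X b]]] u])
    then show ?thesis unfolding box_def b_def by simp
  qed
  show ?thesis
    unfolding box_def[symmetric] interior_operator_def doctr_nat_def
    using box_car box_mono box_nat defl idem by (simp add: pre_doctr_def)
qed

end
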